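(* Consider the following setting. $\mathcal{G}$ is a connected undirected graph with nodes $\{1,\dots,n\}$, edges $\{1,\dots,m\}$ and incidence matrix $B\in\mathbb{R}^{n\times m}$; $p\ge1$ and $E=\begin{bmatrix} I_{p}\\ \mathbf{0}_{(n-p)\times p}\end{bmatrix}$. Let $T_x\in\mathbb{R}^{n\times n}$, $T_\mu,T_\xi\in\mathbb{R}^{m\times m}$, $T_\theta,T_\phi\in\mathbb{R}^{p\times p}$ be diagonal with strictly positive diagonal entries, $d\in\mathbb{R}^n$ a constant vector, $h(x)=(h_1(x_1),\dots,h_n(x_n))^T$ with each $h_i:\mathbb{R}\to\mathbb{R}$ continuously differentiable and strictly increasing, and $\overline y\in\mathbb{R}^n$ with $\overline y_i\in\mathcal{R}(h_i)$ for all $i$. Let $f(\mu)=(f_1(\mu_1),\dots,f_m(\mu_m))^T$ and $g(\theta)=(g_1(\theta_1),\dots,g_p(\theta_p))^T$ with $f_k,g_i:\mathbb{R}\to\mathbb{R}$. Let $Q=\operatorname{diag}(q_1,\dots,q_p)$, $q_i>0$, $r\in\mathbb{R}^p$, and let $L^{com}\in\mathbb{R}^{p\times p}$ be the Laplacian matrix of a weighted directed graph on $\{1,\dots,p\}$ that is balanced and strongly connected. Define $\overline u=Q^{-1}(\kappa-r)$ with $\kappa=E^T\frac{\mathbb{1}_n\mathbb{1}_n^T}{\mathbb{1}_p^TQ^{-1}\mathbb{1}_p}(d+EQ^{-1}r)$, and assume that there exists $\omega\in\mathbb{R}^m$ with $[B^\dagger(E\overline u-d)+(I-B^\dagger B)\omega]_k\in\mathcal{R}(f_k)$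 for all $k$, and that $\overline u_i\in\mathcal{R}(g_i)$ for all $i\in\{1,\dots,p\}$. Consider the closed-loop system $$\begin{aligned} T_x\dot x&=-Bf(\mu)+Eg(\theta)-d,\\ T_\mu\dot\mu&=B^T(h(x)-\overline y)-(f(\mu)-\xi),\\ T_\xi\dot\xi&=f(\mu)-\xi,\\ T_\theta\dot\theta&=-E^T(h(x)-\overline y)-(g(\theta)-\phi),\\ T_\phi\dot\phi&=g(\theta)-\phi-QL^{com}(Q\phi+r), \end{aligned}$$ with state $(x,\mu,\xi,\theta,\phi)\in\mathbb{R}^n\times\mathbb{R}^m\times\mathbb{R}^m\times\mathbb{R}^p\times\mathbb{R}^p$. Then this system has an equilibrium $(\overline x,\overline\mu,\overline\xi,\overline\theta,\overline\phi)$, and every equilibrium satisfies $h(\overline x)=\overline y$ and $g(\overline\theta)=\overline u$.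
   Context: $\mathcal{R}(f)$ denotes the range of a function $f$; $B^\dagger$ is the Moore–Penrose pseudoinverse of $B$; $\mathbb{1}_k$ is the all-ones vector of length $k$. The incidence matrix $B$ is obtained by arbitrarily orienting each edge: $b_{ik}=+1$ if node $i$ is the positive end of edge $k$, $-1$ if the negative end, $0$ otherwise. A weighted directed graph is balanced if at every node the weighted in-degree equals the weighted out-degree; its Laplacian is $L^{com}=D-A$ with $A$ the weighted adjacency matrix and $D$ the diagonal matrix of weighted out-degrees. The vector $\overline u$ is the minimizer of $\frac12u^TQu+r^Tu$ subject to $\mathbf{0}=-B\lambda+Eu-d$. *)

theory Defs
  imports Complex_Main "Jordan_Normal_Form.Matrix"
begin

(* Undirected graph with nodes 0..<n and edges 0..<m; edge k joins fst (ends k)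
   (its positive end) and snd (ends k) (its negative end). *)
definition graph_adj :: "nat \<Rightarrow> (nat \<Rightarrow> nat \<times> nat) \<Rightarrow> nat \<Rightarrow> nat \<Rightarrow> bool" where
  "graph_adj m ends i j \<longleftrightarrow> (\<exists>k<m. ends k = (i, j) \<or> ends k = (j, i))"

definition wf_graph :: "nat \<Rightarrow> nat \<Rightarrow> (nat \<Rightarrow> nat \<times> nat) \<Rightarrow> bool" where
  "wf_graph n m ends \<longleftrightarrow> (\<forall>k<m. fst (ends k) < n \<and> snd (ends k) < n \<and> fst (ends k) \<noteq> snd (ends k))"

definition connected_graph :: "nat \<Rightarrow> nat \<Rightarrow> (nat \<Rightarrow> nat \<times> nat) \<Rightarrow> bool" where
  "connected_graph n m ends \<longleftrightarrow> wf_graph n m ends \<and>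
     (\<forall>i<n. \<forall>j<n. (graph_adj m ends)\<^sup>*\<^sup>* i j)"

definition incidence_mat :: "nat \<Rightarrow> nat \<Rightarrow> (nat \<Rightarrow> nat \<times> nat) \<Rightarrow> real mat" where
  "incidence_mat n m ends = mat n m (\<lambda>(i, k).
      if i = fst (ends k) then 1 else if i = snd (ends k) then -1 else 0)"

definition pinv_mat :: "real mat \<Rightarrow> real mat" where
  "pinv_mat A = (THE X. X \<in> carrier_mat (dim_col A) (dim_row A) \<and>
      A * X * A = A \<and> X * A * X = X \<and>
      transpose_mat (A * X) = A * X \<and> transpose_mat (X * A) = X * A)"

definition weighted_digraph :: "nat \<Rightarrow> (nat \<Rightarrow> nat \<Rightarrow> real) \<Rightarrow> bool" where
  "weighted_digraph p a \<longleftrightarrow> (\<forall>i<p. \<forall>j<p. a i j \<ge> 0)"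

definition balanced_digraph :: "nat \<Rightarrow> (nat \<Rightarrow> nat \<Rightarrow> real) \<Rightarrow> bool" where
  "balanced_digraph p a \<longleftrightarrow> (\<forall>i<p. (\<Sum>j<p. a j i) = (\<Sum>j<p. a i j))"

definition strongly_connected_digraph :: "nat \<Rightarrow> (nat \<Rightarrow> nat \<Rightarrow> real) \<Rightarrow> bool" where
  "strongly_connected_digraph p a \<longleftrightarrow>
     (\<forall>i<p. \<forall>j<p. (\<lambda>u v. u < p \<and> v < p \<and> a u v > 0)\<^sup>*\<^sup>* i j)"

definition laplacian_mat :: "nat \<Rightarrow> (nat \<Rightarrow> nat \<Rightarrow> real) \<Rightarrow> real mat" where
  "laplacian_mat p a = mat p p (\<lambda>(i, j). (if i = j then (\<Sum>k<p. a i k) else 0) - a i j)"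

definition pos_diag_mat :: "nat \<Rightarrow> real mat \<Rightarrow> bool" where
  "pos_diag_mat k T \<longleftrightarrow> T \<in> carrier_mat k k \<and> diagonal_mat T \<and> (\<forall>i<k. T $$ (i, i) > 0)"

definition C1_fun :: "(real \<Rightarrow> real) \<Rightarrow> bool" where
  "C1_fun h \<longleftrightarrow> (\<exists>h'. (\<forall>x. (h has_real_derivative h' x) (at x)) \<and> continuous_on UNIV h')"

definition Emat :: "nat \<Rightarrow> nat \<Rightarrow> real mat" where
  "Emat n p = append_rows (1\<^sub>m p) (0\<^sub>m (n - p) p)"

definition ones_vec :: "nat \<Rightarrow> real vec" where
  "ones_vec k = vec k (\<lambda>_. 1)"

definition app_vec :: "(nat \<Rightarrow> real \<Rightarrow> real) \<Rightarrow> real vec \<Rightarrow> real vec" where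
  "app_vec F x = vec (dim_vec x) (\<lambda>i. F i (x $ i))"

definition kappa_vec :: "nat \<Rightarrow> nat \<Rightarrow> real mat \<Rightarrow> real vec \<Rightarrow> real vec \<Rightarrow> real vec" where
  "kappa_vec n p Qinv r d =
     transpose_mat (Emat n p) *\<^sub>v
       (((1 / (ones_vec p \<bullet> (Qinv *\<^sub>v ones_vec p))) \<cdot>\<^sub>m mat n n (\<lambda>_. 1)) *\<^sub>v
          (d + Emat n p *\<^sub>v (Qinv *\<^sub>v r)))"

definition ubar_vec :: "nat \<Rightarrow> nat \<Rightarrow> (nat \<Rightarrow> real) \<Rightarrow> real vec \<Rightarrow> real vec \<Rightarrow> real vec" where
  "ubar_vec n p q r d =
     (let Qinv = mat_diag p (\<lambda>i. 1 / q i) in Qinv *\<^sub>v (kappa_vec n p Qinv r d - r))"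

(* Equilibrium: the zero velocity satisfies each implicit ODE T \<dot>z = F(z) *)
definition is_equilibrium ::
  "nat \<Rightarrow> nat \<Rightarrow> nat \<Rightarrow> real mat \<Rightarrow> real mat \<Rightarrow> real mat \<Rightarrow> real mat \<Rightarrow> real mat \<Rightarrow> real mat \<Rightarrow>
   real vec \<Rightarrow> (nat \<Rightarrow> real \<Rightarrow> real) \<Rightarrow> real vec \<Rightarrow> (nat \<Rightarrow> real \<Rightarrow> real) \<Rightarrow> (nat \<Rightarrow> real \<Rightarrow> real) \<Rightarrow>
   real mat \<Rightarrow> real vec \<Rightarrow> real mat \<Rightarrow>
   real vec \<Rightarrow> real vec \<Rightarrow> real vec \<Rightarrow> real vec \<Rightarrow> real vec \<Rightarrow> bool" where
  "is_equilibrium n m p B Tx Tmu Txi Ttheta Tphi d h ybar f g Q r Lcom x mu xi theta phi \<longleftrightarrow>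
     x \<in> carrier_vec n \<and> mu \<in> carrier_vec m \<and> xi \<in> carrier_vec m \<and>
     theta \<in> carrier_vec p \<and> phi \<in> carrier_vec p \<and>
     (let E = Emat n p in
       Tx *\<^sub>v 0\<^sub>v n = - (B *\<^sub>v app_vec f mu) + E *\<^sub>v app_vec g theta - d \<and>
       Tmu *\<^sub>v 0\<^sub>v m = transpose_mat B *\<^sub>v (app_vec h x - ybar) - (app_vec f mu - xi) \<and>
       Txi *\<^sub>v 0\<^sub>v m = app_vec f mu - xi \<and>
       Ttheta *\<^sub>v 0\<^sub>v p = - (transpose_mat E *\<^sub>v (app_vec h x - ybar)) - (app_vec g theta - phi) \<and>
       Tphi *\<^sub>v 0\<^sub>v p = app_vec g theta - phi - Q *\<^sub>v (Lcom *\<^sub>v (Q *\<^sub>v phi + r)))"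

end

theory Submission
  imports Defs "Jordan_Normal_Form.Determinant"
begin
lemma Emat_carrier: "p \<le> n \<Longrightarrow> Emat n p \<in> carrier_mat n p"
  unfolding Emat_def by (metis carrier_append_rows le_add_diff_inverse one_carrier_mat zero_carrier_mat)

lemma Emat_index: "p \<le> n \<Longrightarrow> i < n \<Longrightarrow> j < p \<Longrightarrow> Emat n p $$ (i,j) = (if i = j then 1 else 0)"
  unfolding Emat_def append_rows_def
  by (auto simp: index_mat_four_block)

lemma Emat_mult: assumes "p \<le> n" "x \<in> carrier_vec p" "i < n"
  shows "(Emat n p *\<^sub>v x) $ i = (if i < p then x $ i else 0)"
proof -
  have "(Emat n p *\<^sub>v x) $ i = (\<Sum>j<p. Emat n p $$ (i,j) * x $ j)"
    using assms Emat_carrier[OF assms(1)] by (auto simp: scalar_prod_def lessThan_atLeast0)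
  also have "\<dots> = (\<Sum>j<p. if j = i then x $ i else 0)"
    using assms by (intro sum.cong, auto simp: Emat_index)
  finally show ?thesis by simp
qed

lemma EmatT_mult: assumes "p \<le> n" "y \<in> carrier_vec n" "i < p"
  shows "(transpose_mat (Emat n p) *\<^sub>v y) $ i = y $ i"
proof -
  have "(transpose_mat (Emat n p) *\<^sub>v y) $ i = (\<Sum>j<n. Emat n p $$ (j,i) * y $ j)"
    using assms Emat_carrier[OF assms(1)] by (auto simp: scalar_prod_def lessThan_atLeast0)
  also have "\<dots> = (\<Sum>j<n. if j = i then y $ i else 0)"
    using assms by (intro sum.cong, auto simp: Emat_index)
  finally show ?thesis using assms by simp
qed

lemma inc_carrier: "incidence_mat n m ends \<in> carrier_mat n m"
  unfolding incidence_mat_def by auto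

lemma inc_col_sum: assumes "wf_graph n m ends" "k < m"
  shows "(\<Sum>i<n. incidence_mat n m ends $$ (i,k) * y i) = y (fst (ends k)) - y (snd (ends k))"
proof -
  have "(\<Sum>i<n. incidence_mat n m ends $$ (i,k) * y i)
     = (\<Sum>i<n. (if i = fst (ends k) then y i else 0) + (if i = snd (ends k) then - y i else 0))"
    using assms unfolding wf_graph_def incidence_mat_def by (intro sum.cong, auto)
  also have "\<dots> = y (fst (ends k)) - y (snd (ends k))"
    using assms unfolding wf_graph_def by (simp add: sum.distrib)
  finally show ?thesis .
qed

lemma incT_mult: assumes "wf_graph n m ends" "y \<in> carrier_vec n" "k < m"
  shows "(transpose_mat (incidence_mat n m ends) *\<^sub>v y) $ k = y $ fst (ends k) - y $ snd (ends k)"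
proof -
  have "(transpose_mat (incidence_mat n m ends) *\<^sub>v y) $ k = (\<Sum>i<n. incidence_mat n m ends $$ (i,k) * y $ i)"
    using assms inc_carrier[of n m ends] by (auto simp: scalar_prod_def lessThan_atLeast0)
  then show ?thesis using inc_col_sum[OF assms(1,3), of "\<lambda>i. y $ i"] by simp
qed

lemma inc_sum: assumes "wf_graph n m ends" "w \<in> carrier_vec m"
  shows "(\<Sum>i<n. (incidence_mat n m ends *\<^sub>v w) $ i) = 0"
proof -
  let ?B = "incidence_mat n m ends"
  have B: "?B \<in> carrier_mat n m" by (rule inc_carrier)
  have "transpose_mat ?B *\<^sub>v ones_vec n = 0\<^sub>v m"
    using assms incT_mult[OF assms(1), of "ones_vec n"] B
    by (intro eq_vecI, auto simp: ones_vec_def wf_graph_def)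
  hence "0 = (transpose_mat ?B *\<^sub>v ones_vec n) \<bullet> w" using assms by simp
  also have "\<dots> = ones_vec n \<bullet> (?B *\<^sub>v w)"
    by (rule transpose_vec_mult_scalar[OF B assms(2)], simp add: ones_vec_def)
  also have "\<dots> = (\<Sum>i<n. (?B *\<^sub>v w) $ i)"
    using B by (simp add: scalar_prod_def ones_vec_def lessThan_atLeast0)
  finally show ?thesis by simp
qed

lemma incT_zero_const: assumes "connected_graph n m ends" "y \<in> carrier_vec n"
  and z: "transpose_mat (incidence_mat n m ends) *\<^sub>v y = 0\<^sub>v m"
  and "i < n" "j < n"
  shows "y $ i = y $ j"
proof -
  have wf: "wf_graph n m ends" using assms(1) unfolding connected_graph_def by blast
  have edge: "y $ u = y $ v" if adj: "graph_adj m ends u v" for u v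
  proof -
    obtain k where k: "k < m" "ends k = (u, v) \<or> ends k = (v, u)"
      using adj unfolding graph_adj_def by blast
    have "(transpose_mat (incidence_mat n m ends) *\<^sub>v y) $ k = 0" using z k(1) by simp
    hence "y $ fst (ends k) = y $ snd (ends k)" using incT_mult[OF wf assms(2) k(1)] by simp
    then show ?thesis using k(2) by (cases "ends k = (u, v)") auto
  qed
  have "(graph_adj m ends)\<^sup>*\<^sup>* i j" using assms(1,4,5) unfolding connected_graph_def by blast
  then show ?thesis
  proof (induction rule: rtranclp_induct)
    case base then show ?case by simp
  next
    case (step b c) then show ?case using edge[of b c] by simp
  qed
qed

lemma lap_carrier: "laplacian_mat p a \<in> carrier_mat p p"
  unfolding laplacian_mat_def by auto

lemma lap_mult: assumes "v \<in> carrier_vec p" "i < p"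
  shows "(laplacian_mat p a *\<^sub>v v) $ i = (\<Sum>j<p. a i j * (v $ i - v $ j))"
proof -
  have "(laplacian_mat p a *\<^sub>v v) $ i = (\<Sum>j<p. ((if i = j then (\<Sum>k<p. a i k) else 0) - a i j) * v $ j)"
    using assms by (auto simp: laplacian_mat_def scalar_prod_def lessThan_atLeast0)
  also have "\<dots> = (\<Sum>j<p. (if i = j then (\<Sum>k<p. a i k) * v $ i else 0)) - (\<Sum>j<p. a i j * v $ j)"
    unfolding sum_subtractf[symmetric] by (intro sum.cong, auto simp: left_diff_distrib)
  also have "\<dots> = (\<Sum>j<p. a i j * (v $ i - v $ j))"
    using assms by (simp add: sum_subtractf right_diff_distrib sum_distrib_right)
  finally show ?thesis .
qed

lemma lap_sum: assumes "balanced_digraph p a" "v \<in> carrier_vec p"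
  shows "(\<Sum>i<p. (laplacian_mat p a *\<^sub>v v) $ i) = 0"
proof -
  have "(\<Sum>i<p. (laplacian_mat p a *\<^sub>v v) $ i) = (\<Sum>i<p. \<Sum>j<p. a i j * v $ i) - (\<Sum>i<p. \<Sum>j<p. a i j * v $ j)"
    using assms by (simp add: lap_mult right_diff_distrib sum_subtractf)
  also have "(\<Sum>i<p. \<Sum>j<p. a i j * v $ j) = (\<Sum>j<p. \<Sum>i<p. a i j * v $ j)"
    by (rule sum.swap)
  also have "\<dots> = (\<Sum>j<p. (\<Sum>i<p. a i j) * v $ j)" by (simp add: sum_distrib_right)
  also have "\<dots> = (\<Sum>j<p. (\<Sum>i<p. a j i) * v $ j)"
    using assms(1) unfolding balanced_digraph_def by (intro sum.cong, auto)
  also have "(\<Sum>i<p. \<Sum>j<p. a i j * v $ i) = (\<Sum>j<p. (\<Sum>i<p. a j i) * v $ j)"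
    by (simp add: sum_distrib_right)
  finally show ?thesis by simp
qed

lemma lap_kernel: assumes w: "weighted_digraph p a" and sc: "strongly_connected_digraph p a"
  and v: "v \<in> carrier_vec p" and z: "\<forall>i<p. (laplacian_mat p a *\<^sub>v v) $ i = 0"
  and ij: "i < p" "j < p"
  shows "v $ i = v $ j"
proof -
  define M where "M = Max ((\<lambda>k. v $ k) ` {..<p})"
  have fin: "finite ((\<lambda>k. v $ k) ` {..<p})" by simp
  have le: "v $ k \<le> M" if "k < p" for k using that unfolding M_def by (intro Max_ge, auto)
  obtain i0 where i0: "i0 < p" "v $ i0 = M"
    using Max_in[OF fin] ij unfolding M_def by fastforce
  have stp: "v $ w' = M" if "u < p" "w' < p" "a u w' > 0" "v $ u = M" for u w'
  proof -
    have nn: "\<forall>j\<in>{..<p}. 0 \<le> a u j * (v $ u - v $ j)"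
      using w le that unfolding weighted_digraph_def by auto
    have "(\<Sum>j<p. a u j * (v $ u - v $ j)) = 0" using z lap_mult[OF v that(1)] that by auto
    hence "\<forall>j\<in>{..<p}. a u j * (v $ u - v $ j) = 0" using sum_nonneg_eq_0_iff[of "{..<p}" "\<lambda>j. a u j * (v $ u - v $ j)"] nn by auto
    hence "a u w' * (v $ u - v $ w') = 0" using that(2) by blast
    thus ?thesis using that by auto
  qed
  have all: "v $ k = M" if "k < p" for k
  proof -
    have "(\<lambda>u v. u < p \<and> v < p \<and> a u v > 0)\<^sup>*\<^sup>* i0 k" using sc i0 that
      unfolding strongly_connected_digraph_def by blast
    then show ?thesis
    proof (induction rule: rtranclp_induct)
      case base then show ?case using i0 by simp
    next
      case (step b c) then show ?case using stp[of b c] by blast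
    qed
  qed
  show ?thesis using all ij by auto
qed

lemma lap_const: "laplacian_mat p a *\<^sub>v vec p (\<lambda>_. c) = 0\<^sub>v p"
proof (intro eq_vecI)
  fix i assume i: "i < dim_vec (0\<^sub>v p :: real vec)"
  have "(laplacian_mat p a *\<^sub>v vec p (\<lambda>_. c)) $ i = (\<Sum>j<p. a i j * (vec p (\<lambda>_. c) $ i - vec p (\<lambda>_. c) $ j))"
    using i by (intro lap_mult, auto)
  then show "(laplacian_mat p a *\<^sub>v vec p (\<lambda>_. c)) $ i = 0\<^sub>v p $ i" using i by simp
qed (simp add: lap_carrier[THEN carrier_matD(1)])

lemma pinv_unique:
  fixes A X Y :: "real mat"
  assumes A: "A \<in> carrier_mat n m" and X: "X \<in> carrier_mat m n" and Y: "Y \<in> carrier_mat m n"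
  and X1: "A * X * A = A" and X2: "X * A * X = X" and X3: "transpose_mat (A * X) = A * X"
  and X4: "transpose_mat (X * A) = X * A"
  and Y1: "A * Y * A = A" and Y2: "Y * A * Y = Y" and Y3: "transpose_mat (A * Y) = A * Y"
  and Y4: "transpose_mat (Y * A) = Y * A"
  shows "X = Y"
proof -
  have AT1: "transpose_mat A = transpose_mat A * (A * Y)"
  proof -
    have "transpose_mat A = transpose_mat ((A * Y) * A)" using Y1 by simp
    also have "\<dots> = transpose_mat A * transpose_mat (A * Y)"
      by (rule transpose_mult, insert A Y, auto)
    finally show ?thesis using Y3 by simp
  qed
  have AT2: "transpose_mat A = (Y * A) * transpose_mat A"
  proof -
    have "transpose_mat A = transpose_mat (A * (Y * A))" using Y1 A Y by simp
    also have "\<dots> = transpose_mat (Y * A) * transpose_mat A"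
      by (rule transpose_mult, insert A Y, auto)
    finally show ?thesis using Y4 by simp
  qed
  have AX: "A * X = A * Y"
  proof -
    have "A * X = transpose_mat (A * X)" using X3 by simp
    also have "\<dots> = transpose_mat X * transpose_mat A" by (rule transpose_mult, insert A X, auto)
    also have "\<dots> = transpose_mat X * (transpose_mat A * (A * Y))" using AT1 by simp
    also have "\<dots> = (transpose_mat X * transpose_mat A) * (A * Y)"
      by (rule assoc_mult_mat[symmetric], insert A X Y, auto)
    also have "transpose_mat X * transpose_mat A = transpose_mat (A * X)"
      by (rule transpose_mult[symmetric], insert A X, auto)
    also have "\<dots> = A * X" using X3 .
    also have "A * X * (A * Y) = (A * X * A) * Y"
      by (rule assoc_mult_mat[symmetric], insert A X Y, auto)
    finally show ?thesis using X1 by simp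
  qed
  have XA: "X * A = Y * A"
  proof -
    have "X * A = transpose_mat (X * A)" using X4 by simp
    also have "\<dots> = transpose_mat A * transpose_mat X" by (rule transpose_mult, insert A X, auto)
    also have "\<dots> = ((Y * A) * transpose_mat A) * transpose_mat X" using AT2 by simp
    also have "\<dots> = (Y * A) * (transpose_mat A * transpose_mat X)"
      by (rule assoc_mult_mat, insert A X Y, auto)
    also have "transpose_mat A * transpose_mat X = transpose_mat (X * A)"
      by (rule transpose_mult[symmetric], insert A X, auto)
    also have "\<dots> = X * A" using X4 .
    also have "Y * A * (X * A) = (Y * A * X) * A"
      by (rule assoc_mult_mat[symmetric], insert A X Y, auto)
    also have "Y * A * X = Y * (A * X)" by (rule assoc_mult_mat, insert A X Y, auto)
    also have "Y * (A * X) * A = Y * (A * X * A)" by (rule assoc_mult_mat, insert A X Y, auto)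
    finally show ?thesis using X1 by simp
  qed
  have "X = X * A * X" using X2 by simp
  also have "\<dots> = X * (A * X)" by (rule assoc_mult_mat, insert A X Y, auto)
  also have "\<dots> = X * (A * Y)" using AX by simp
  also have "\<dots> = (X * A) * Y" by (rule assoc_mult_mat[symmetric], insert A X Y, auto)
  also have "\<dots> = (Y * A) * Y" using XA by simp
  finally show ?thesis using Y2 by simp
qed

lemma K_inj:
  fixes B :: "real mat"
  assumes conn: "connected_graph n m ends" and n: "0 < n"
  and B: "B = incidence_mat n m ends"
  and v: "v \<in> carrier_vec n"
  and z: "(B * transpose_mat B + (1 / real n) \<cdot>\<^sub>m mat n n (\<lambda>_. 1)) *\<^sub>v v = 0\<^sub>v n"
  shows "v = 0\<^sub>v n"
proof -
  have wf: "wf_graph n m ends" using conn unfolding connected_graph_def by blast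
  have Bc: "B \<in> carrier_mat n m" using B inc_carrier by simp
  define u where "u = transpose_mat B *\<^sub>v v"
  have u: "u \<in> carrier_vec m" unfolding u_def by (rule mult_mat_vec_carrier[of _ m n], insert Bc v, auto)
  define S where "S = (\<Sum>j<n. v $ j)"
  have comp: "(B *\<^sub>v u) $ i + (1 / real n) * S = 0" if i: "i < n" for i
  proof -
    have "(B * transpose_mat B + (1 / real n) \<cdot>\<^sub>m mat n n (\<lambda>_. 1)) *\<^sub>v v
        = (B * transpose_mat B) *\<^sub>v v + ((1 / real n) \<cdot>\<^sub>m mat n n (\<lambda>_. 1)) *\<^sub>v v"
      by (rule add_mult_distrib_mat_vec, insert Bc v, auto)
    also have "(B * transpose_mat B) *\<^sub>v v = B *\<^sub>v u" unfolding u_def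
      by (rule assoc_mult_mat_vec, insert Bc v, auto)
    finally have e1: "B *\<^sub>v u + ((1 / real n) \<cdot>\<^sub>m mat n n (\<lambda>_. 1)) *\<^sub>v v = 0\<^sub>v n"
      using z by simp
    have e2: "(B *\<^sub>v u + ((1 / real n) \<cdot>\<^sub>m mat n n (\<lambda>_. 1)) *\<^sub>v v) $ i
       = (B *\<^sub>v u) $ i + (((1 / real n) \<cdot>\<^sub>m mat n n (\<lambda>_. 1)) *\<^sub>v v) $ i"
      using i Bc u by (intro index_add_vec, auto)
    have e3: "(((1 / real n) \<cdot>\<^sub>m mat n n (\<lambda>_. 1)) *\<^sub>v v) $ i = (1 / real n) * S"
      using i v by (simp add: scalar_prod_def S_def sum_distrib_left lessThan_atLeast0)
    show ?thesis using e1 e2 e3 i by simp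
  qed
  have "(\<Sum>i<n. (B *\<^sub>v u) $ i + (1 / real n) * S) = 0" using comp by simp
  hence "(\<Sum>i<n. (B *\<^sub>v u) $ i) + real n * ((1 / real n) * S) = 0" by (simp add: sum.distrib)
  hence S0: "S = 0" using inc_sum[OF wf u] B n by simp
  hence Bu: "B *\<^sub>v u = 0\<^sub>v n" using comp Bc by (intro eq_vecI, auto)
  have "u \<bullet> u = (transpose_mat B *\<^sub>v v) \<bullet> u" unfolding u_def ..
  also have "\<dots> = v \<bullet> (B *\<^sub>v u)" by (rule transpose_vec_mult_scalar[OF Bc u v])
  also have "\<dots> = 0" using Bu v by simp
  finally have uu: "(\<Sum>k<m. u $ k * u $ k) = 0" using u by (simp add: scalar_prod_def lessThan_atLeast0)
  have "\<forall>k\<in>{..<m}. u $ k * u $ k = 0"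
    using sum_nonneg_eq_0_iff[of "{..<m}" "\<lambda>k. u $ k * u $ k"] uu by auto
  hence u0: "transpose_mat B *\<^sub>v v = 0\<^sub>v m" using u unfolding u_def[symmetric] by (intro eq_vecI, auto)
  have const: "v $ i = v $ 0" if "i < n" for i
    using incT_zero_const[OF conn v u0[unfolded B] that n] .
  have "S = (\<Sum>j<n. v $ 0)" unfolding S_def by (rule sum.cong, simp, rule const, simp)
  hence "S = real n * v $ 0" by simp
  hence v00: "v $ 0 = 0" using S0 n by simp
  show ?thesis
  proof (rule eq_vecI)
    fix i assume "i < dim_vec (0\<^sub>v n :: real vec)"
    hence "i < n" by simp
    thus "v $ i = 0\<^sub>v n $ i" using const[of i] v00 by simp
  qed (use v in simp)
qed

lemma K_inverse:
  fixes B :: "real mat"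
  assumes conn: "connected_graph n m ends" and n: "0 < n"
  and B: "B = incidence_mat n m ends"
  shows "\<exists>Ki \<in> carrier_mat n n. Ki * (B * transpose_mat B + (1 / real n) \<cdot>\<^sub>m mat n n (\<lambda>_. 1)) = 1\<^sub>m n
     \<and> (B * transpose_mat B + (1 / real n) \<cdot>\<^sub>m mat n n (\<lambda>_. 1)) * Ki = 1\<^sub>m n"
proof -
  let ?K = "B * transpose_mat B + (1 / real n) \<cdot>\<^sub>m mat n n (\<lambda>_. 1)"
  have Bc: "B \<in> carrier_mat n m" using B inc_carrier by simp
  have Kc: "?K \<in> carrier_mat n n" using Bc by auto
  have "det ?K \<noteq> 0"
    unfolding det_0_iff_vec_prod_zero[OF Kc] using K_inj[OF conn n B] by blast
  from det_non_zero_imp_unit[OF Kc this, of undefined]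
  show ?thesis unfolding Units_def ring_mat_def by auto
qed

lemma inc_pinv:
  fixes B :: "real mat"
  assumes conn: "connected_graph n m ends" and n: "0 < n"
  and B: "B = incidence_mat n m ends"
  shows "pinv_mat B \<in> carrier_mat m n \<and> B * pinv_mat B * B = B
     \<and> B * pinv_mat B = 1\<^sub>m n - (1 / real n) \<cdot>\<^sub>m mat n n (\<lambda>_. 1)"
proof -
  define J :: "real mat" where "J = mat n n (\<lambda>_. 1)"
  define c :: real where "c = 1 / real n"
  define K where "K = B * transpose_mat B + c \<cdot>\<^sub>m J"
  have wf: "wf_graph n m ends" using conn unfolding connected_graph_def by blast
  have Bc: "B \<in> carrier_mat n m" using B inc_carrier by simp
  have Jc: "J \<in> carrier_mat n n" unfolding J_def by simp
  have Kc: "K \<in> carrier_mat n n" unfolding K_def using Bc Jc by auto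
  obtain Ki where Ki: "Ki \<in> carrier_mat n n" "Ki * K = 1\<^sub>m n" "K * Ki = 1\<^sub>m n"
    using K_inverse[OF conn n B] unfolding K_def c_def J_def by blast
  have colsum: "(\<Sum>i<n. B $$ (i,k)) = 0" if "k < m" for k
    using inc_col_sum[OF wf that, of "\<lambda>_. 1"] B by simp
  have JB: "J * B = 0\<^sub>m n m"
    using Bc colsum by (intro eq_matI, auto simp: J_def scalar_prod_def lessThan_atLeast0)
  have BTJ: "transpose_mat B * J = 0\<^sub>m m n"
    using Bc colsum by (intro eq_matI, auto simp: J_def scalar_prod_def lessThan_atLeast0)
  have JJ: "J * J = real n \<cdot>\<^sub>m J"
    by (intro eq_matI, auto simp: J_def scalar_prod_def)
  have cn: "c * real n = 1" using n unfolding c_def by simp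
  have JT: "transpose_mat J = J" unfolding J_def by (intro eq_matI, auto)
  have KT: "transpose_mat K = K"
  proof -
    have "transpose_mat K = transpose_mat (B * transpose_mat B) + transpose_mat (c \<cdot>\<^sub>m J)"
      unfolding K_def by (rule transpose_add, insert Bc Jc, auto)
    also have "transpose_mat (B * transpose_mat B) = B * transpose_mat B"
      by (subst transpose_mult[of _ n m _ n], insert Bc, auto)
    also have "transpose_mat (c \<cdot>\<^sub>m J) = c \<cdot>\<^sub>m J" using JT by (intro eq_matI, auto simp: J_def)
    finally show ?thesis unfolding K_def .
  qed
  have KJ: "K * J = J"
  proof -
    have "K * J = (B * transpose_mat B) * J + (c \<cdot>\<^sub>m J) * J"
      unfolding K_def by (rule add_mult_distrib_mat, insert Bc Jc, auto)
    also have "(B * transpose_mat B) * J = B * (transpose_mat B * J)"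
      by (rule assoc_mult_mat, insert Bc Jc, auto)
    also have "\<dots> = 0\<^sub>m n n" using BTJ Bc by simp
    also have "(c \<cdot>\<^sub>m J) * J = c \<cdot>\<^sub>m (J * J)" by (rule mult_smult_assoc_mat, insert Jc, auto)
    also have "\<dots> = J" unfolding JJ using cn by (intro eq_matI, auto simp: J_def)
    finally show ?thesis using Jc by simp
  qed
  have JK: "J * K = J"
  proof -
    have "J * K = J * (B * transpose_mat B) + J * (c \<cdot>\<^sub>m J)"
      unfolding K_def by (rule mult_add_distrib_mat, insert Bc Jc, auto)
    also have "J * (B * transpose_mat B) = (J * B) * transpose_mat B"
      by (rule assoc_mult_mat[symmetric], insert Bc Jc, auto)
    also have "\<dots> = 0\<^sub>m n n" using JB Bc by simp
    also have "J * (c \<cdot>\<^sub>m J) = c \<cdot>\<^sub>m (J * J)" by (rule mult_smult_distrib, insert Jc, auto)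
    also have "\<dots> = J" unfolding JJ using cn by (intro eq_matI, auto simp: J_def)
    finally show ?thesis using Jc by simp
  qed
  have KiJ: "Ki * J = J"
  proof -
    have "Ki * J = Ki * (K * J)" using KJ by simp
    also have "\<dots> = (Ki * K) * J" by (rule assoc_mult_mat[symmetric], insert Ki Kc Jc, auto)
    finally show ?thesis using Ki Jc by simp
  qed
  have JKi: "J * Ki = J"
  proof -
    have "J * Ki = (J * K) * Ki" using JK by simp
    also have "\<dots> = J * (K * Ki)" by (rule assoc_mult_mat, insert Ki Kc Jc, auto)
    finally show ?thesis using Ki Jc by simp
  qed
  have KiT: "transpose_mat Ki = Ki"
  proof -
    have "transpose_mat Ki * K = transpose_mat (K * Ki)"
      using KT by (subst transpose_mult[of _ n n _ n], insert Ki Kc, auto)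
    hence TK: "transpose_mat Ki * K = 1\<^sub>m n" using Ki by simp
    have "transpose_mat Ki = transpose_mat Ki * (K * Ki)" using Ki by simp
    also have "\<dots> = (transpose_mat Ki * K) * Ki" by (rule assoc_mult_mat[symmetric], insert Ki Kc, auto)
    finally show ?thesis using TK Ki by simp
  qed
  define X where "X = transpose_mat B * Ki"
  have Xc: "X \<in> carrier_mat m n" unfolding X_def using Bc Ki by auto
  define P where "P = 1\<^sub>m n - c \<cdot>\<^sub>m J"
  have Pc: "P \<in> carrier_mat n n" unfolding P_def using Jc by auto
  have BX: "B * X = P"
  proof -
    have "K * Ki = (B * transpose_mat B) * Ki + (c \<cdot>\<^sub>m J) * Ki"
      unfolding K_def by (rule add_mult_distrib_mat, insert Bc Jc Ki, auto)
    also have "(c \<cdot>\<^sub>m J) * Ki = c \<cdot>\<^sub>m (J * Ki)" by (rule mult_smult_assoc_mat, insert Jc Ki, auto)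
    also have "(B * transpose_mat B) * Ki = B * X" unfolding X_def
      by (rule assoc_mult_mat, insert Bc Ki, auto)
    finally have E: "B * X + c \<cdot>\<^sub>m J = 1\<^sub>m n" using Ki JKi by simp
    have BXc: "B * X \<in> carrier_mat n n" using Bc Xc by auto
    show ?thesis
    proof (rule eq_matI)
      fix i j assume ij: "i < dim_row P" "j < dim_col P"
      hence "(B * X + c \<cdot>\<^sub>m J) $$ (i, j) = 1\<^sub>m n $$ (i, j)" using E by simp
      thus "(B * X) $$ (i, j) = P $$ (i, j)" using ij BXc Jc Pc unfolding P_def by auto
    qed (use BXc Pc in auto)
  qed
  have PT: "transpose_mat P = P" unfolding P_def J_def by (intro eq_matI, auto)
  have PB: "P * B = B"
  proof -
    have "P * B = 1\<^sub>m n * B - (c \<cdot>\<^sub>m J) * B"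
      unfolding P_def by (rule minus_mult_distrib_mat, insert Bc Jc, auto)
    also have "(c \<cdot>\<^sub>m J) * B = c \<cdot>\<^sub>m (J * B)" by (rule mult_smult_assoc_mat, insert Jc Bc, auto)
    finally show ?thesis using JB Bc by (simp, intro eq_matI, auto)
  qed
  have X1: "B * X * B = B" using BX PB by simp
  have X2: "X * B * X = X"
  proof -
    have "X * B * X = X * P" using BX by (subst assoc_mult_mat[of _ m n _ m _ n], insert Bc Xc, auto)
    also have "X * P = X * 1\<^sub>m n - X * (c \<cdot>\<^sub>m J)"
      unfolding P_def by (rule mult_minus_distrib_mat, insert Xc Jc, auto)
    also have "X * (c \<cdot>\<^sub>m J) = c \<cdot>\<^sub>m (X * J)" by (rule mult_smult_distrib, insert Xc Jc, auto)
    also have "X * J = transpose_mat B * (Ki * J)" unfolding X_def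
      by (rule assoc_mult_mat, insert Bc Ki Jc, auto)
    also have "\<dots> = 0\<^sub>m m n" using KiJ BTJ by simp
    finally show ?thesis using Xc by (simp, intro eq_matI, auto)
  qed
  have X3: "transpose_mat (B * X) = B * X" using BX PT by simp
  have X4: "transpose_mat (X * B) = X * B"
  proof -
    have XB: "X * B = transpose_mat B * (Ki * B)" unfolding X_def
      by (rule assoc_mult_mat, insert Bc Ki, auto)
    have "transpose_mat (transpose_mat B * (Ki * B)) = transpose_mat (Ki * B) * B"
      by (subst transpose_mult[of _ m n _ m], insert Bc Ki, auto)
    also have "transpose_mat (Ki * B) = transpose_mat B * Ki"
      using KiT by (subst transpose_mult[of _ n n _ m], insert Bc Ki, auto)
    also have "transpose_mat B * Ki * B = transpose_mat B * (Ki * B)"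
      by (rule assoc_mult_mat, insert Bc Ki, auto)
    finally show ?thesis using XB by simp
  qed
  have pin: "pinv_mat B = X"
    unfolding pinv_mat_def
  proof (rule the_equality)
    show "X \<in> carrier_mat (dim_col B) (dim_row B) \<and> B * X * B = B \<and> X * B * X = X \<and>
      transpose_mat (B * X) = B * X \<and> transpose_mat (X * B) = X * B"
      using Xc Bc X1 X2 X3 X4 by auto
  next
    fix Y assume Y: "Y \<in> carrier_mat (dim_col B) (dim_row B) \<and> B * Y * B = B \<and> Y * B * Y = Y \<and>
      transpose_mat (B * Y) = B * Y \<and> transpose_mat (Y * B) = Y * B"
    show "Y = X"
      by (rule pinv_unique[OF Bc _ Xc], insert Y Bc X1 X2 X3 X4, auto)
  qed
  show ?thesis using pin Xc X1 BX unfolding P_def c_def J_def by auto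
qed

lemma mat_zero_vec: "(T :: real mat) \<in> carrier_mat k l \<Longrightarrow> T *\<^sub>v 0\<^sub>v l = 0\<^sub>v k"
  by (intro eq_vecI, auto)

lemma diag_mult: assumes "v \<in> carrier_vec p" "i < p"
  shows "(mat_diag p f *\<^sub>v v) $ i = f i * (v $ i :: real)"
proof -
  have "(mat_diag p f *\<^sub>v v) $ i = (\<Sum>j<p. (if i = j then f j else 0) * v $ j)"
    using assms by (auto simp: mat_diag_def scalar_prod_def lessThan_atLeast0)
  also have "\<dots> = (\<Sum>j<p. if j = i then f i * v $ i else 0)" by (intro sum.cong, auto)
  finally show ?thesis using assms by simp
qed

lemma sum_lt_split: fixes p n :: nat shows "p \<le> n \<Longrightarrow> (\<Sum>i<n. if i < p then f i else 0) = (\<Sum>i<p. f i :: real)"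
proof -
  assume "p \<le> n"
  hence "{..<n} \<inter> {i. i < p} = {..<p}" by auto
  moreover have "(\<Sum>i<n. if i < p then f i else 0) = (\<Sum>i\<in>{..<n} \<inter> {i. i < p}. f i)"
    by (simp add: sum.inter_restrict)
  ultimately show ?thesis by simp
qed

lemma ubar_index:
  assumes p: "p \<le> n" and d: "d \<in> carrier_vec n" and r: "r \<in> carrier_vec p" and i: "i < p"
  shows "ubar_vec n p q r d $ i =
    (((\<Sum>j<n. d $ j) + (\<Sum>j<p. r $ j / q j)) / (\<Sum>j<p. 1 / q j) - r $ i) / q i"
    and "ubar_vec n p q r d \<in> carrier_vec p"
proof -
  define Qinv where "Qinv = mat_diag p (\<lambda>i. 1 / q i)"
  define s where "s = ones_vec p \<bullet> (Qinv *\<^sub>v ones_vec p)"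
  define z where "z = d + Emat n p *\<^sub>v (Qinv *\<^sub>v r)"
  have Ec: "Emat n p \<in> carrier_mat n p" by (rule Emat_carrier[OF p])
  have Qc: "Qinv \<in> carrier_mat p p" unfolding Qinv_def by simp
  have zc: "z \<in> carrier_vec n" unfolding z_def using d Ec Qc r by auto
  have s: "s = (\<Sum>j<p. 1 / q j)"
  proof -
    have "s = (\<Sum>j<p. ones_vec p $ j * (Qinv *\<^sub>v ones_vec p) $ j)"
      unfolding s_def using Qc by (simp add: scalar_prod_def lessThan_atLeast0)
    also have "\<dots> = (\<Sum>j<p. 1 / q j)" unfolding Qinv_def
      by (intro sum.cong refl, subst diag_mult, auto simp: ones_vec_def)
    finally show ?thesis .
  qed
  have zs: "(\<Sum>j<n. z $ j) = (\<Sum>j<n. d $ j) + (\<Sum>j<p. r $ j / q j)"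
  proof -
    have zj: "z $ j = d $ j + (if j < p then r $ j / q j else 0)" if j: "j < n" for j
    proof -
      have Qr: "Qinv *\<^sub>v r \<in> carrier_vec p" using Qc r by simp
      have "z $ j = d $ j + (Emat n p *\<^sub>v (Qinv *\<^sub>v r)) $ j"
        unfolding z_def using j d Ec Qr by simp
      also have "(Emat n p *\<^sub>v (Qinv *\<^sub>v r)) $ j = (if j < p then (Qinv *\<^sub>v r) $ j else 0)"
        by (rule Emat_mult[OF p Qr j])
      also have "(if j < p then (Qinv *\<^sub>v r) $ j else 0) = (if j < p then r $ j / q j else 0)"
        unfolding Qinv_def using r diag_mult[OF r, of j "\<lambda>i. 1 / q i"] by auto
      finally show ?thesis .
    qed
    have "(\<Sum>j<n. z $ j) = (\<Sum>j<n. d $ j + (if j < p then r $ j / q j else 0))"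
      by (intro sum.cong refl zj, simp)
    also have "\<dots> = (\<Sum>j<n. d $ j) + (\<Sum>j<p. r $ j / q j)"
      by (simp add: sum.distrib sum_lt_split[OF p])
    finally show ?thesis .
  qed
  define kap where "kap = kappa_vec n p Qinv r d"
  have kap: "kap = transpose_mat (Emat n p) *\<^sub>v (((1 / s) \<cdot>\<^sub>m mat n n (\<lambda>_. 1)) *\<^sub>v z)"
    unfolding kap_def kappa_vec_def s_def z_def ..
  have Jz: "((1 / s) \<cdot>\<^sub>m mat n n (\<lambda>_. 1)) *\<^sub>v z \<in> carrier_vec n"
    by (rule mult_mat_vec_carrier[of _ n n], insert zc, auto)
  have kc: "kap \<in> carrier_vec p" unfolding kap using Ec Jz by simp
  have ki: "kap $ j = (1 / s) * (\<Sum>j<n. z $ j)" if j: "j < p" for j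
  proof -
    have "kap $ j = (((1 / s) \<cdot>\<^sub>m mat n n (\<lambda>_. 1)) *\<^sub>v z) $ j"
      unfolding kap using EmatT_mult[OF p Jz j] .
    also have "\<dots> = (1 / s) * (\<Sum>j<n. z $ j)"
      using j p zc by (simp add: scalar_prod_def sum_distrib_left lessThan_atLeast0)
    finally show ?thesis .
  qed
  have ub: "ubar_vec n p q r d = Qinv *\<^sub>v (kap - r)"
    unfolding ubar_vec_def Qinv_def kap_def Let_def ..
  show "ubar_vec n p q r d \<in> carrier_vec p" unfolding ub using Qc kc r by simp
  have "ubar_vec n p q r d $ i = 1 / q i * (kap - r) $ i"
    unfolding ub Qinv_def using kc r i by (intro diag_mult, auto)
  also have "\<dots> = ((1 / s) * (\<Sum>j<n. z $ j) - r $ i) / q i" using ki[OF i] kc r i by simp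
  finally show "ubar_vec n p q r d $ i =
    (((\<Sum>j<n. d $ j) + (\<Sum>j<p. r $ j / q j)) / (\<Sum>j<p. 1 / q j) - r $ i) / q i"
    unfolding zs s by simp
qed

lemma mat_zero_vec0: "(\<omega> :: real vec) \<in> carrier_vec m \<Longrightarrow> 0\<^sub>m n m *\<^sub>v \<omega> = 0\<^sub>v n"
  by (intro eq_vecI, auto)

theorem lemma5:
  fixes n m p :: nat and ends :: "nat \<Rightarrow> nat \<times> nat"
    and Tx Tmu Txi Ttheta Tphi :: "real mat"
    and d ybar r :: "real vec" and q :: "nat \<Rightarrow> real"
    and h f g :: "nat \<Rightarrow> real \<Rightarrow> real" and a :: "nat \<Rightarrow> nat \<Rightarrow> real"
  defines "B \<equiv> incidence_mat n m ends"
    and "E \<equiv> Emat n p"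
    and "Q \<equiv> mat_diag p q"
    and "Lcom \<equiv> laplacian_mat p a"
    and "ubar \<equiv> ubar_vec n p q r d"
  assumes graph: "connected_graph n m ends"
    and p: "1 \<le> p" "p \<le> n"
    and Tx: "pos_diag_mat n Tx" and Tmu: "pos_diag_mat m Tmu" and Txi: "pos_diag_mat m Txi"
    and Ttheta: "pos_diag_mat p Ttheta" and Tphi: "pos_diag_mat p Tphi"
    and d: "d \<in> carrier_vec n"
    and h_C1: "\<forall>i<n. C1_fun (h i)" and h_mono: "\<forall>i<n. strict_mono (h i)"
    and ybar: "ybar \<in> carrier_vec n" "\<forall>i<n. ybar $ i \<in> range (h i)"
    and q: "\<forall>i<p. q i > 0" and r: "r \<in> carrier_vec p"
    and dg: "weighted_digraph p a" "balanced_digraph p a" "strongly_connected_digraph p a"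
    and omega: "\<exists>\<omega> \<in> carrier_vec m. \<forall>k<m.
        (pinv_mat B *\<^sub>v (E *\<^sub>v ubar - d) + (1\<^sub>m m - pinv_mat B * B) *\<^sub>v \<omega>) $ k \<in> range (f k)"
    and ubar_rng: "\<forall>i<p. ubar $ i \<in> range (g i)"
  shows "(\<exists>x mu xi theta phi.
            is_equilibrium n m p B Tx Tmu Txi Ttheta Tphi d h ybar f g Q r Lcom x mu xi theta phi)
       \<and> (\<forall>x mu xi theta phi.
            is_equilibrium n m p B Tx Tmu Txi Ttheta Tphi d h ybar f g Q r Lcom x mu xi theta phi
            \<longrightarrow> app_vec h x = ybar \<and> app_vec g theta = ubar)"
proof -
  have wf: "wf_graph n m ends" using graph unfolding connected_graph_def by blast
  have n0: "0 < n" using p by simp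
  have Bc: "B \<in> carrier_mat n m" unfolding B_def by (rule inc_carrier)
  have Ec: "E \<in> carrier_mat n p" unfolding E_def by (rule Emat_carrier[OF p(2)])
  have Qc: "Q \<in> carrier_mat p p" unfolding Q_def by simp
  have Lc: "Lcom \<in> carrier_mat p p" unfolding Lcom_def by (rule lap_carrier)
  have Txc: "Tx \<in> carrier_mat n n" using Tx unfolding pos_diag_mat_def by blast
  have Tmuc: "Tmu \<in> carrier_mat m m" using Tmu unfolding pos_diag_mat_def by blast
  have Txic: "Txi \<in> carrier_mat m m" using Txi unfolding pos_diag_mat_def by blast
  have Tthc: "Ttheta \<in> carrier_mat p p" using Ttheta unfolding pos_diag_mat_def by blast
  have Tphc: "Tphi \<in> carrier_mat p p" using Tphi unfolding pos_diag_mat_def by blast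
  have pinv: "pinv_mat B \<in> carrier_mat m n" "B * pinv_mat B * B = B"
     "B * pinv_mat B = 1\<^sub>m n - (1 / real n) \<cdot>\<^sub>m mat n n (\<lambda>_. 1)"
    using inc_pinv[OF graph n0 B_def[THEN meta_eq_to_obj_eq]] by auto
  define D where "D = (\<Sum>j<n. d $ j)"
  define R where "R = (\<Sum>j<p. r $ j / q j)"
  define s where "s = (\<Sum>j<p. 1 / q j)"
  define cst where "cst = (D + R) / s"
  have s_pos: "s > 0" unfolding s_def using q p(1)
    by (intro sum_pos, auto simp: lessThan_empty_iff)
  have ubc: "ubar \<in> carrier_vec p" unfolding ubar_def using ubar_index(2)[OF p(2) d r, of 0] p(1) by simp
  have ubi: "ubar $ i = (cst - r $ i) / q i" if "i < p" for i
    unfolding ubar_def cst_def D_def R_def s_def using ubar_index(1)[OF p(2) d r that] .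
  have sum_ub: "(\<Sum>i<p. (c - r $ i) / q i) = c * s - R" for c
    unfolding s_def R_def sum_distrib_left
    by (simp add: sum_subtractf[symmetric] diff_divide_distrib)
  have ub_sum: "(\<Sum>i<p. ubar $ i) = D"
  proof -
    have "(\<Sum>i<p. ubar $ i) = (\<Sum>i<p. (cst - r $ i) / q i)" by (intro sum.cong refl ubi, simp)
    also have "\<dots> = D" unfolding sum_ub cst_def using s_pos by simp
    finally show ?thesis .
  qed
  have Esum: "(\<Sum>i<n. (E *\<^sub>v v) $ i) = (\<Sum>i<p. v $ i)" if "v \<in> carrier_vec p" for v
  proof -
    have "(\<Sum>i<n. (E *\<^sub>v v) $ i) = (\<Sum>i<n. if i < p then v $ i else 0)"
      unfolding E_def by (intro sum.cong refl Emat_mult[OF p(2) that], simp)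
    also have "\<dots> = (\<Sum>i<p. v $ i)" by (rule sum_lt_split[OF p(2)])
    finally show ?thesis .
  qed
  show ?thesis
  proof
    obtain \<omega> where om: "\<omega> \<in> carrier_vec m" "\<forall>k<m.
        (pinv_mat B *\<^sub>v (E *\<^sub>v ubar - d) + (1\<^sub>m m - pinv_mat B * B) *\<^sub>v \<omega>) $ k \<in> range (f k)"
      using omega by blast
    define v where "v = E *\<^sub>v ubar - d"
    have vc: "v \<in> carrier_vec n" unfolding v_def using Ec ubc d by simp
    have vi: "v $ i = (E *\<^sub>v ubar) $ i - d $ i" if "i < n" for i
      unfolding v_def using that Ec ubc d by simp
    have vsum: "(\<Sum>i<n. v $ i) = 0"
    proof -
      have "(\<Sum>i<n. v $ i) = (\<Sum>i<n. (E *\<^sub>v ubar) $ i) - D"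
        unfolding D_def sum_subtractf[symmetric] by (intro sum.cong refl vi, simp)
      also have "\<dots> = 0" using Esum[OF ubc] ub_sum by simp
      finally show ?thesis .
    qed
    define w where "w = pinv_mat B *\<^sub>v v + (1\<^sub>m m - pinv_mat B * B) *\<^sub>v \<omega>"
    have PBc: "1\<^sub>m m - pinv_mat B * B \<in> carrier_mat m m" using pinv(1) Bc by auto
    have wc1: "pinv_mat B *\<^sub>v v \<in> carrier_vec m" using pinv(1) vc by simp
    have wc2: "(1\<^sub>m m - pinv_mat B * B) *\<^sub>v \<omega> \<in> carrier_vec m"
      by (rule mult_mat_vec_carrier[OF PBc om(1)])
    have wc: "w \<in> carrier_vec m" unfolding w_def using wc1 wc2 by simp
    have Pv: "(1\<^sub>m n - (1 / real n) \<cdot>\<^sub>m mat n n (\<lambda>_. 1)) *\<^sub>v v = v"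
    proof (rule eq_vecI)
      fix i assume "i < dim_vec v" hence i: "i < n" using vc by simp
      have "((1\<^sub>m n - (1 / real n) \<cdot>\<^sub>m mat n n (\<lambda>_. 1)) *\<^sub>v v) $ i
          = (\<Sum>j<n. ((if i = j then 1 else 0) - 1 / real n) * v $ j)"
        using i vc by (simp add: scalar_prod_def lessThan_atLeast0)
      also have "\<dots> = (\<Sum>j<n. (if j = i then v $ i else 0) - 1 / real n * v $ j)"
        by (intro sum.cong refl, auto simp: left_diff_distrib)
      also have "\<dots> = v $ i - 1 / real n * (\<Sum>j<n. v $ j)"
        using i by (simp add: sum_subtractf sum_distrib_left)
      finally show "((1\<^sub>m n - (1 / real n) \<cdot>\<^sub>m mat n n (\<lambda>_. 1)) *\<^sub>v v) $ i = v $ i"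
        using vsum by simp
    qed (use vc in simp)
    have Bw: "B *\<^sub>v w = v"
    proof -
      have "B *\<^sub>v w = B *\<^sub>v (pinv_mat B *\<^sub>v v) + B *\<^sub>v ((1\<^sub>m m - pinv_mat B * B) *\<^sub>v \<omega>)"
        unfolding w_def by (rule mult_add_distrib_mat_vec[OF Bc wc1 wc2])
      also have "B *\<^sub>v (pinv_mat B *\<^sub>v v) = (B * pinv_mat B) *\<^sub>v v"
        by (rule assoc_mult_mat_vec[symmetric], insert pinv(1) Bc vc, auto)
      also have "\<dots> = v" using Pv pinv(3) by simp
      also have "B *\<^sub>v ((1\<^sub>m m - pinv_mat B * B) *\<^sub>v \<omega>) = (B * (1\<^sub>m m - pinv_mat B * B)) *\<^sub>v \<omega>"
        by (rule assoc_mult_mat_vec[symmetric, OF Bc PBc om(1)])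
      also have "B * (1\<^sub>m m - pinv_mat B * B) = B * 1\<^sub>m m - B * (pinv_mat B * B)"
        by (rule mult_minus_distrib_mat, insert pinv(1) Bc, auto)
      also have "B * (pinv_mat B * B) = B * pinv_mat B * B"
        by (rule assoc_mult_mat[symmetric], insert pinv(1) Bc, auto)
      also have "B * 1\<^sub>m m - B * pinv_mat B * B = 0\<^sub>m n m" using pinv(2) Bc by (intro eq_matI, auto)
      also have "0\<^sub>m n m *\<^sub>v \<omega> = 0\<^sub>v n" by (rule mat_zero_vec0, rule om(1))
      finally show ?thesis using vc by simp
    qed
    define x where "x = vec n (\<lambda>i. SOME t. h i t = ybar $ i)"
    define theta where "theta = vec p (\<lambda>i. SOME t. g i t = ubar $ i)"
    define mu where "mu = vec m (\<lambda>k. SOME t. f k t = w $ k)"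
    have hx: "app_vec h x = ybar"
    proof (rule eq_vecI)
      fix i assume "i < dim_vec ybar" hence i: "i < n" using ybar(1) by simp
      obtain t where "h i t = ybar $ i" using ybar(2) i by (metis rangeE)
      hence "h i (SOME t. h i t = ybar $ i) = ybar $ i" by (rule someI)
      thus "app_vec h x $ i = ybar $ i" using i unfolding app_vec_def x_def by simp
    qed (use ybar(1) in \<open>simp add: app_vec_def x_def\<close>)
    have gth: "app_vec g theta = ubar"
    proof (rule eq_vecI)
      fix i assume "i < dim_vec ubar" hence i: "i < p" using ubc by simp
      obtain t where "g i t = ubar $ i" using ubar_rng i by (metis rangeE)
      hence "g i (SOME t. g i t = ubar $ i) = ubar $ i" by (rule someI)
      thus "app_vec g theta $ i = ubar $ i" using i unfolding app_vec_def theta_def by simp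
    qed (use ubc in \<open>simp add: app_vec_def theta_def\<close>)
    have fmu: "app_vec f mu = w"
    proof (rule eq_vecI)
      fix k assume "k < dim_vec w" hence k: "k < m" using wc by simp
      obtain t where "f k t = w $ k" using om(2) k unfolding w_def v_def by (metis rangeE)
      hence "f k (SOME t. f k t = w $ k) = w $ k" by (rule someI)
      thus "app_vec f mu $ k = w $ k" using k unfolding app_vec_def mu_def by simp
    qed (use wc in \<open>simp add: app_vec_def mu_def\<close>)
    have Qub: "Q *\<^sub>v ubar + r = vec p (\<lambda>_. cst)"
    proof (rule eq_vecI)
      fix i assume "i < dim_vec (vec p (\<lambda>_. cst))" hence i: "i < p" by simp
      have "(Q *\<^sub>v ubar) $ i = q i * ubar $ i" unfolding Q_def by (rule diag_mult[OF ubc i])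
      thus "(Q *\<^sub>v ubar + r) $ i = vec p (\<lambda>_. cst) $ i"
        using i ubi[OF i] q[rule_format, OF i] r Qc ubc by simp
    qed (use r in simp)
    have eq: "is_equilibrium n m p B Tx Tmu Txi Ttheta Tphi d h ybar f g Q r Lcom x mu w theta ubar"
      unfolding is_equilibrium_def Let_def E_def[symmetric] hx gth fmu
    proof (intro conjI)
      show "x \<in> carrier_vec n" "mu \<in> carrier_vec m" "w \<in> carrier_vec m"
        "theta \<in> carrier_vec p" "ubar \<in> carrier_vec p"
        using wc ubc unfolding x_def mu_def theta_def by auto
      show "Tx *\<^sub>v 0\<^sub>v n = - (B *\<^sub>v w) + E *\<^sub>v ubar - d"
        unfolding mat_zero_vec[OF Txc] Bw using vc Ec ubc d by (intro eq_vecI, auto simp: vi)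
      show "Tmu *\<^sub>v 0\<^sub>v m = transpose_mat B *\<^sub>v (ybar - ybar) - (w - w)"
      proof -
        have "ybar - ybar = 0\<^sub>v n" using ybar(1) by simp
        hence "transpose_mat B *\<^sub>v (ybar - ybar) = 0\<^sub>v m" using Bc mat_zero_vec[of "transpose_mat B" m n] by simp
        thus ?thesis unfolding mat_zero_vec[OF Tmuc] using wc by simp
      qed
      show "Txi *\<^sub>v 0\<^sub>v m = w - w" unfolding mat_zero_vec[OF Txic] using wc by simp
      show "Ttheta *\<^sub>v 0\<^sub>v p = - (transpose_mat E *\<^sub>v (ybar - ybar)) - (ubar - ubar)"
      proof -
        have "ybar - ybar = 0\<^sub>v n" using ybar(1) by simp
        hence "transpose_mat E *\<^sub>v (ybar - ybar) = 0\<^sub>v p" using Ec mat_zero_vec[of "transpose_mat E" p n] by simp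
        thus ?thesis unfolding mat_zero_vec[OF Tthc] using ubc by simp
      qed
      show "Tphi *\<^sub>v 0\<^sub>v p = ubar - ubar - Q *\<^sub>v (Lcom *\<^sub>v (Q *\<^sub>v ubar + r))"
        unfolding mat_zero_vec[OF Tphc] Qub Lcom_def lap_const mat_zero_vec[OF Qc] using ubc by simp
    qed
    show "\<exists>x mu xi theta phi.
            is_equilibrium n m p B Tx Tmu Txi Ttheta Tphi d h ybar f g Q r Lcom x mu xi theta phi"
      using eq by blast
  next
    show "\<forall>x mu xi theta phi.
            is_equilibrium n m p B Tx Tmu Txi Ttheta Tphi d h ybar f g Q r Lcom x mu xi theta phi
            \<longrightarrow> app_vec h x = ybar \<and> app_vec g theta = ubar"
    proof (intro allI impI)
      fix x mu xi theta phi
      assume eq: "is_equilibrium n m p B Tx Tmu Txi Ttheta Tphi d h ybar f g Q r Lcom x mu xi theta phi"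
      define F where "F = app_vec f mu"
      define G where "G = app_vec g theta"
      define y where "y = app_vec h x - ybar"
      define z where "z = Q *\<^sub>v phi + r"
      have xc: "x \<in> carrier_vec n" and muc: "mu \<in> carrier_vec m" and xic: "xi \<in> carrier_vec m"
        and thc: "theta \<in> carrier_vec p" and phc: "phi \<in> carrier_vec p"
        and e1: "Tx *\<^sub>v 0\<^sub>v n = - (B *\<^sub>v F) + E *\<^sub>v G - d"
        and e2: "Tmu *\<^sub>v 0\<^sub>v m = transpose_mat B *\<^sub>v y - (F - xi)"
        and e3: "Txi *\<^sub>v 0\<^sub>v m = F - xi"
        and e4: "Ttheta *\<^sub>v 0\<^sub>v p = - (transpose_mat E *\<^sub>v y) - (G - phi)"
        and e5: "Tphi *\<^sub>v 0\<^sub>v p = G - phi - Q *\<^sub>v (Lcom *\<^sub>v z)"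
        using eq unfolding is_equilibrium_def Let_def E_def[symmetric] F_def[symmetric]
          G_def[symmetric] y_def[symmetric] z_def[symmetric] by auto
      have Fc: "F \<in> carrier_vec m" unfolding F_def app_vec_def using muc by simp
      have Gc: "G \<in> carrier_vec p" unfolding G_def app_vec_def using thc by simp
      have hxc: "app_vec h x \<in> carrier_vec n" unfolding app_vec_def using xc by simp
      have yc: "y \<in> carrier_vec n" unfolding y_def using hxc ybar(1) by simp
      have zc: "z \<in> carrier_vec p" unfolding z_def using Qc phc r by simp
      have Lzc: "Lcom *\<^sub>v z \<in> carrier_vec p" using Lc zc by simp
      have c1: "- (B *\<^sub>v F) $ i + (E *\<^sub>v G) $ i - d $ i = 0" if i: "i < n" for i
      proof -
        have "0\<^sub>v n $ i = (- (B *\<^sub>v F) + E *\<^sub>v G - d) $ i" using e1 mat_zero_vec[OF Txc] by simp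
        thus ?thesis using i Bc Ec Fc Gc d by simp
      qed
      have c3: "F $ k - xi $ k = 0" if k: "k < m" for k
      proof -
        have "0\<^sub>v m $ k = (F - xi) $ k" using e3 mat_zero_vec[OF Txic] by simp
        thus ?thesis using k Fc xic by simp
      qed
      have c2: "(transpose_mat B *\<^sub>v y) $ k = 0" if k: "k < m" for k
      proof -
        have "0\<^sub>v m $ k = (transpose_mat B *\<^sub>v y - (F - xi)) $ k" using e2 mat_zero_vec[OF Tmuc] by simp
        thus ?thesis using k Fc xic Bc yc c3[OF k] by simp
      qed
      have c4: "G $ i - phi $ i = - y $ i" if i: "i < p" for i
      proof -
        have "0\<^sub>v p $ i = (- (transpose_mat E *\<^sub>v y) - (G - phi)) $ i"
          using e4 mat_zero_vec[OF Tthc] by simp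
        moreover have "(transpose_mat E *\<^sub>v y) $ i = y $ i" unfolding E_def
          by (rule EmatT_mult[OF p(2) yc i])
        ultimately show ?thesis using i Ec yc Gc phc by simp
      qed
      have c5: "G $ i - phi $ i - q i * (Lcom *\<^sub>v z) $ i = 0" if i: "i < p" for i
      proof -
        have "0\<^sub>v p $ i = (G - phi - Q *\<^sub>v (Lcom *\<^sub>v z)) $ i"
          using e5 mat_zero_vec[OF Tphc] by simp
        moreover have "(Q *\<^sub>v (Lcom *\<^sub>v z)) $ i = q i * (Lcom *\<^sub>v z) $ i" unfolding Q_def
          by (rule diag_mult[OF Lzc i])
        ultimately show ?thesis using i Qc Lzc Gc phc by simp
      qed
      have BTy: "transpose_mat B *\<^sub>v y = 0\<^sub>v m" using c2 Bc yc by (intro eq_vecI, auto)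
      have yconst: "y $ i = y $ 0" if "i < n" for i
        using incT_zero_const[OF graph yc BTy[unfolded B_def] that n0] .
      define c0 where "c0 = y $ 0"
      have Lzi: "(Lcom *\<^sub>v z) $ i = - c0 / q i" if i: "i < p" for i
      proof -
        have "q i * (Lcom *\<^sub>v z) $ i = - c0"
          using c4[OF i] c5[OF i] yconst[of i] i p(2) unfolding c0_def by simp
        thus ?thesis using q[rule_format, OF i] by (simp add: field_simps)
      qed
      have "0 = (\<Sum>i<p. (Lcom *\<^sub>v z) $ i)" using lap_sum[OF dg(2) zc] unfolding Lcom_def by simp
      also have "\<dots> = (\<Sum>i<p. - c0 / q i)" by (intro sum.cong refl Lzi, simp)
      also have "\<dots> = - c0 * s" unfolding s_def sum_distrib_left by simp
      finally have c00: "c0 = 0" using s_pos by simp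
      have hx: "app_vec h x = ybar"
      proof (rule eq_vecI)
        fix i assume "i < dim_vec ybar" hence i: "i < n" using ybar(1) by simp
        have "y $ i = 0" using yconst[OF i] c00 unfolding c0_def by simp
        thus "app_vec h x $ i = ybar $ i" unfolding y_def using i hxc ybar(1) by simp
      qed (use hxc ybar(1) in simp)
      have Gphi: "G $ i = phi $ i" if i: "i < p" for i
        using c4[OF i] yconst[of i] c00 i p(2) unfolding c0_def by simp
      have Lz0: "\<forall>i<p. (Lcom *\<^sub>v z) $ i = 0" using Lzi c00 by simp
      define \<alpha> where "\<alpha> = z $ 0"
      have zconst: "z $ i = \<alpha>" if i: "i < p" for i
        unfolding \<alpha>_def using lap_kernel[OF dg(1) dg(3) zc Lz0[unfolded Lcom_def] i, of 0] p(1) by simp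
      have phii: "phi $ i = (\<alpha> - r $ i) / q i" if i: "i < p" for i
      proof -
        have "(Q *\<^sub>v phi) $ i = q i * phi $ i" unfolding Q_def by (rule diag_mult[OF phc i])
        hence "z $ i = q i * phi $ i + r $ i" unfolding z_def using i Qc phc r by simp
        thus ?thesis using zconst[OF i] q[rule_format, OF i] by (simp add: field_simps)
      qed
      have "0 = (\<Sum>i<n. (0::real))" by simp
      also have "\<dots> = (\<Sum>i<n. - (B *\<^sub>v F) $ i + (E *\<^sub>v G) $ i - d $ i)"
        by (intro sum.cong refl, rule c1[symmetric], simp)
      also have "\<dots> = - (\<Sum>i<n. (B *\<^sub>v F) $ i) + (\<Sum>i<n. (E *\<^sub>v G) $ i) - D"
        unfolding D_def by (simp add: sum.distrib sum_subtractf sum_negf)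
      also have "(\<Sum>i<n. (B *\<^sub>v F) $ i) = 0" unfolding B_def by (rule inc_sum[OF wf Fc])
      also have "(\<Sum>i<n. (E *\<^sub>v G) $ i) = (\<Sum>i<p. G $ i)" by (rule Esum[OF Gc])
      also have "\<dots> = (\<Sum>i<p. (\<alpha> - r $ i) / q i)"
        by (intro sum.cong refl, simp add: Gphi phii)
      also have "\<dots> = \<alpha> * s - R" by (rule sum_ub)
      finally have "\<alpha> * s = D + R" by simp
      hence acst: "\<alpha> = cst" unfolding cst_def using s_pos by (simp add: field_simps)
      have gth: "app_vec g theta = ubar"
      proof (rule eq_vecI)
        fix i assume "i < dim_vec ubar" hence i: "i < p" using ubc by simp
        show "app_vec g theta $ i = ubar $ i"
          using Gphi[OF i] phii[OF i] ubi[OF i] acst unfolding G_def by simp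
      qed (use thc ubc in \<open>simp add: app_vec_def\<close>)
      show "app_vec h x = ybar \<and> app_vec g theta = ubar" using hx gth by simp
    qed
  qed
qed

end
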